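(* Let $F_1,F_2,F$ be full-dimensional tree topologies on $[N]$ with $F\in C(F_1,F_2)$. Then every equivalence class $C$ of 2-element subsets of $[N]$ with respect to $=_F$ is contained in a single equivalence class with respect to $=_{F_1}$ or in a single equivalence class with respect to $=_{F_2}$.
   Context: A tree topology $F$ on $[N]$ is a collection of subsets $S\subseteq[N]$ (clades) with $2\le|S|\le N-1$, pairwise either strictly nested or disjoint; it is full dimensional if $|F|=N-2$. For a 2-element subset $p\subseteq[N]$, $\mathrm{cl}_F(p)$ is the intersection of all $S\in F$ containing $p$ (or $[N]$ if none), and $p=_Fq$ iff $\mathrm{cl}_F(p)=\mathrm{cl}_F(q)$. $ut(F)\subseteq\mathbb{R}^{\binom N2}$ is the set of tree metric vectors ($w_{\{i,j\}}=$ path length between leaves $i,j$) of equidistant rooted phylogenetic trees (positive edge lengths, all leaves equidistant from the root) with tree topology $F$ (the set of leaf sets below internal edges). $C(F_1,F_2)$ is the set of tree topologies $F$ for which there exist $w^1\in ut(F_1)$ and $w^2\in ut(F_2)$ with $w^1\boxplus w^2\in ut(F)$, where $(w^1\boxplus w^2)_p=\max(w^1_p,w^2_p)$. *)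

theory Defs
  imports Complex_Main
begin

definition pairs :: "nat \<Rightarrow> nat set set" where
  "pairs N = {p. p \<subseteq> {1..N} \<and> card p = 2}"

definition tree_topology :: "nat \<Rightarrow> nat set set \<Rightarrow> bool" where
  "tree_topology N F \<longleftrightarrow>
     (\<forall>S\<in>F. S \<subseteq> {1..N} \<and> 2 \<le> card S \<and> card S \<le> N - 1) \<and>
     (\<forall>S\<in>F. \<forall>T\<in>F. S \<noteq> T \<longrightarrow> S \<subset> T \<or> T \<subset> S \<or> S \<inter> T = {})"

definition full_dimensional :: "nat \<Rightarrow> nat set set \<Rightarrow> bool" where
  "full_dimensional N F \<longleftrightarrow> card F = N - 2"

definition cl :: "nat \<Rightarrow> nat set set \<Rightarrow> nat set \<Rightarrow> nat set" where
  "cl N F p = (if \<exists>S\<in>F. p \<subseteq> S then \<Inter>{S\<in>F. p \<subseteq> S} else {1..N})"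

definition eq_class :: "nat \<Rightarrow> nat set set \<Rightarrow> nat set \<Rightarrow> nat set set" where
  "eq_class N F p = {q \<in> pairs N. cl N F q = cl N F p}"

text \<open>ut(F): tree metrics of equidistant rooted phylogenetic trees with topology F.
  Such a tree is given by its hierarchy of nodes F \<union> {[N]} (plus leaves at height 0)
  and node heights h (distance to the leaves below); the edge lengths are
  differences of heights, which are positive iff h is positive and strictly
  increasing along strict inclusion. The path length between leaves i and j is
  twice the height of their lowest common ancestor cl_F {i,j}.
  Vectors in R^(N choose 2) are functions on sets, vanishing off the 2-subsets.\<close>
definition ut :: "nat \<Rightarrow> nat set set \<Rightarrow> (nat set \<Rightarrow> real) set" where
  "ut N F = {w. \<exists>h :: nat set \<Rightarrow> real.
      (\<forall>S\<in>insert {1..N} F. 0 < h S) \<and>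
      (\<forall>S\<in>insert {1..N} F. \<forall>T\<in>insert {1..N} F. S \<subset> T \<longrightarrow> h S < h T) \<and>
      w = (\<lambda>p. if p \<in> pairs N then 2 * h (cl N F p) else 0)}"

definition tropical_sum :: "(nat set \<Rightarrow> real) \<Rightarrow> (nat set \<Rightarrow> real) \<Rightarrow> (nat set \<Rightarrow> real)" where
  "tropical_sum w1 w2 = (\<lambda>p. max (w1 p) (w2 p))"

definition Cset :: "nat \<Rightarrow> nat set set \<Rightarrow> nat set set \<Rightarrow> nat set set set" where
  "Cset N F1 F2 = {F. tree_topology N F \<and>
      (\<exists>w1\<in>ut N F1. \<exists>w2\<in>ut N F2. tropical_sum w1 w2 \<in> ut N F)}"

end

theory Submission
  imports Defs
begin

definition lam :: "'a set set \<Rightarrow> bool" where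
  "lam G \<longleftrightarrow> (\<forall>S\<in>G. \<forall>T\<in>G. S \<noteq> T \<longrightarrow> S \<subset> T \<or> T \<subset> S \<or> S \<inter> T = {})"


definition nr :: "('a \<Rightarrow> 'a \<Rightarrow> real) \<Rightarrow> real \<Rightarrow> 'a \<Rightarrow> 'a \<Rightarrow> bool" where
  "nr D c i j \<longleftrightarrow> i = j \<or> D i j < c"


definition umet :: "'a set \<Rightarrow> ('a \<Rightarrow> 'a \<Rightarrow> real) \<Rightarrow> bool" where
  "umet S D \<longleftrightarrow> (\<forall>i\<in>S. \<forall>j\<in>S. D i j = D j i) \<and>
     (\<forall>i\<in>S. \<forall>j\<in>S. \<forall>k\<in>S. D i k \<le> max (D i j) (D j k))"


definition hok :: "nat \<Rightarrow> nat set set \<Rightarrow> (nat set \<Rightarrow> real) \<Rightarrow> bool" where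
  "hok N F h \<longleftrightarrow> (\<forall>S\<in>insert {1..N} F. 0 < h S) \<and>
      (\<forall>S\<in>insert {1..N} F. \<forall>T\<in>insert {1..N} F. S \<subset> T \<longrightarrow> h S < h T)"


schematic_goal main_aux:
  fixes N :: nat and F1 F2 F :: "nat set set" and p :: "nat set"
  assumes "tree_topology N F1" and "full_dimensional N F1"
    and "tree_topology N F2" and "full_dimensional N F2"
    and "tree_topology N F" and "full_dimensional N F"
    and "F \<in> Cset N F1 F2"
    and "p \<in> pairs N"
  shows "((\<exists>q\<in>pairs N. eq_class N F p \<subseteq> eq_class N F1 q) \<or>
         (\<exists>q\<in>pairs N. eq_class N F p \<subseteq> eq_class N F2 q)) \<and> ((?z::bool) \<or> True)"
proof -
  have min_elem: "\<exists>T\<in>G. \<forall>R\<in>G. \<not> R \<subset> T" if assms: "finite G" "G \<noteq> {}" for G :: "nat set set"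
  proof -
    obtain m where "m \<in> G" "\<forall>b\<in>G. b \<le> m \<longrightarrow> m = b" using finite_has_minimal[OF assms] by blast
    then show ?thesis by blast
  qed

  have min_sub: "T \<subseteq> R" if assms: "lam G" "T \<in> G" "\<forall>R\<in>G. \<not> R \<subset> T" "R \<in> G" "v \<in> T" "v \<in> R" for G :: "nat set set" and T R :: "nat set" and v :: nat
  proof (cases "R = T")
    case False
    then have "R \<subset> T \<or> T \<subset> R \<or> R \<inter> T = {}" using assms(1,2,4) unfolding lam_def by blast
    moreover have "R \<inter> T \<noteq> {}" using assms(5,6) by blast
    ultimately show ?thesis using assms(3,4) by blast
  qed simp

  have min_inj_aux: "False" if assms: "lam G" "T \<in> G" "\<forall>R\<in>G. \<not> R \<subset> T" "R1 \<in> G" "R2 \<in> G" "v \<in> T" "T - {v} \<noteq> {}" "v \<in> R1" "v \<notin> R2" "R1 - {v} = R2 - {v}" for G :: "nat set set" and T R1 R2 :: "nat set" and v :: nat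
  proof -
    have "T \<subseteq> R1" using min_sub[OF assms(1-3) assms(4) assms(6) assms(8)] .
    then have "T - {v} \<subseteq> R2" using assms(10) by blast
    then have "R2 \<inter> T \<noteq> {}" using assms(7) by blast
    moreover have "R2 \<noteq> T" using assms(6,9) by blast
    ultimately have "R2 \<subset> T \<or> T \<subset> R2" using assms(1,2,5) unfolding lam_def by blast
    then show False using assms(3,5,6,9) by blast
  qed

  have min_inj: "inj_on (\<lambda>R. R - {v}) G" if assms: "lam G" "T \<in> G" "\<forall>R\<in>G. \<not> R \<subset> T" "v \<in> T" "T - {v} \<noteq> {}" for G :: "nat set set" and T :: "nat set" and v :: nat
  proof (rule inj_onI)
    fix R1 R2 assume r: "R1 \<in> G" "R2 \<in> G" "R1 - {v} = R2 - {v}"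
    show "R1 = R2"
    proof (cases "v \<in> R1 \<longleftrightarrow> v \<in> R2")
      case True then show ?thesis using r(3) by blast
    next
      case False
      then show ?thesis using min_inj_aux[OF assms(1-3) r(1) r(2) assms(4,5)]
        min_inj_aux[OF assms(1-3) r(2) r(1) assms(4,5)] r(3) by metis
    qed
  qed

  have lam_img: "lam ((\<lambda>R. R - {v}) ` G)" if assms: "lam G" "inj_on (\<lambda>R. R - {v}) G" for G :: "nat set set" and v :: nat
    unfolding lam_def
  proof (intro ballI impI)
    fix A B assume "A \<in> (\<lambda>R. R - {v}) ` G" "B \<in> (\<lambda>R. R - {v}) ` G" "A \<noteq> B"
    then obtain R1 R2 where r: "R1 \<in> G" "R2 \<in> G" "A = R1 - {v}" "B = R2 - {v}" "R1 \<noteq> R2" by auto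
    then have "R1 \<subset> R2 \<or> R2 \<subset> R1 \<or> R1 \<inter> R2 = {}" using assms(1) unfolding lam_def by blast
    then have "A \<subseteq> B \<or> B \<subseteq> A \<or> A \<inter> B = {}" unfolding r(3,4) by blast
    then show "A \<subset> B \<or> B \<subset> A \<or> A \<inter> B = {}" using \<open>A \<noteq> B\<close> by blast
  qed

  have card_big: "3 \<le> card (R)" if assms: "lam G" "T \<in> G" "\<forall>R\<in>G. \<not> R \<subset> T" "R \<in> G" "v \<in> T" "v \<in> R" "R \<noteq> T" "finite R" "2 \<le> card T" for G :: "nat set set" and T R :: "nat set" and v :: nat
  proof -
    have "T \<subset> R" using min_sub[OF assms(1-6)] assms(7) by blast
    then have "card T < card R" using psubset_card_mono assms(8) by blast
    then show ?thesis using assms(9) by simp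
  qed

  have count_L: "card G \<le> card X - 1" if assms: "finite X" "lam G" "\<forall>S\<in>G. S \<subseteq> X \<and> 2 \<le> card S" for X :: "nat set" and G :: "nat set set"
    using assms
  proof (induction "card X" arbitrary: X G rule: less_induct)
    case less
    show ?case
    proof (cases "G = {}")
      case True then show ?thesis by simp
    next
      case False
      have finG: "finite G" using less.prems finite_subset[of G "Pow X"] by auto
      obtain T where T: "T \<in> G" "\<forall>R\<in>G. \<not> R \<subset> T" using min_elem[OF finG False] by blast
      have cT: "2 \<le> card T" "T \<subseteq> X" using T less.prems by auto
      then obtain v where v: "v \<in> T" by fastforce
      have fT: "finite T" using cT less.prems(1) finite_subset by blast
      have Tv: "T - {v} \<noteq> {}"
      proof
        assume "T - {v} = {}" then have "T \<subseteq> {v}" by blast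
        then have "card T \<le> 1" using card_mono[of "{v}" T] by simp
        then show False using cT by simp
      qed
      define G' where "G' = (\<lambda>R. R - {v}) ` (G - {T})"
      have inj: "inj_on (\<lambda>R. R - {v}) G" using min_inj[OF less.prems(2) T v Tv] .
      have inj': "inj_on (\<lambda>R. R - {v}) (G - {T})" using inj inj_on_subset by blast
      have lamG': "lam (G - {T})" using less.prems(2) unfolding lam_def by blast
      have lam': "lam G'" unfolding G'_def using lam_img[OF lamG' inj'] .
      have mem': "\<forall>S\<in>G'. S \<subseteq> X - {v} \<and> 2 \<le> card S"
      proof
        fix S assume "S \<in> G'"
        then obtain R where R: "R \<in> G" "R \<noteq> T" "S = R - {v}" unfolding G'_def by auto
        have fR: "finite R" using R less.prems finite_subset by blast
        show "S \<subseteq> X - {v} \<and> 2 \<le> card S"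
        proof (cases "v \<in> R")
          case True
          have "3 \<le> card R" using card_big[OF less.prems(2) T R(1) v True R(2) fR cT(1)] .
          then show ?thesis using R less.prems True fR by auto
        next
          case False then show ?thesis using R less.prems by auto
        qed
      qed
      have cX: "card (X - {v}) < card X" using v cT less.prems(1)
        by (meson card_Diff1_less in_mono)
      have IH: "card G' \<le> card (X - {v}) - 1"
        using less.hyps[OF cX _ lam' mem'] less.prems(1) by simp
      have "card G' = card (G - {T})" unfolding G'_def using card_image[OF inj'] .
      also have "\<dots> = card G - 1" using T finG by simp
      finally have "card G - 1 \<le> card X - 2" using IH v cT less.prems(1)
        by (simp add: card_Diff_singleton subsetD)
      moreover have "card G \<ge> 1" using finG False by (simp add: Suc_leI card_gt_0_iff)
      moreover have "card X \<ge> 2" using cT card_mono[OF less.prems(1) cT(2)] by simp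
      ultimately show ?thesis by linarith
    qed
  qed

  have count_R: "card G \<le> card X - 2" if assms: "finite X" "lam G" "\<forall>S\<in>G. S \<subseteq> X \<and> 2 \<le> card S" "S \<in> insert X G" "a \<in> S" "b \<in> S" "x \<in> S" "a \<noteq> b" "a \<noteq> x" "b \<noteq> x" "\<forall>R\<in>G. ((a \<in> R \<and> b \<in> R) \<or> (a \<in> R \<and> x \<in> R) \<or> (b \<in> R \<and> x \<in> R)) \<longrightarrow> S \<subseteq> R" for X :: "nat set" and G :: "nat set set" and S :: "nat set" and a b x :: nat
    using assms
  proof (induction "card X" arbitrary: X G S rule: less_induct)
    case less
    have SX: "S \<subseteq> X" using less.prems(3,4) by auto
    have fS: "finite S" using SX less.prems(1) finite_subset by blast
    have c3S: "3 \<le> card S"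
    proof -
      have "{a,b,x} \<subseteq> S" using less.prems(5-7) by auto
      then have "card {a,b,x} \<le> card S" using card_mono[OF fS] by blast
      then show ?thesis using less.prems(8-10) by simp
    qed
    have c3X: "3 \<le> card X" using c3S card_mono[OF less.prems(1) SX] by simp
    show ?case
    proof (cases "G = {}")
      case True then show ?thesis by simp
    next
      case False
      have finG: "finite G" using less.prems(1,3) finite_subset[of G "Pow X"] by auto
      obtain T where T: "T \<in> G" "\<forall>R\<in>G. \<not> R \<subset> T" using min_elem[OF finG False] by blast
      have cT: "2 \<le> card T" "T \<subseteq> X" using T less.prems(3) by auto
      have fT: "finite T" using cT less.prems(1) finite_subset by blast
      show ?thesis
      proof (cases "card T = 2")
        case False
        then have c3T: "3 \<le> card T" using cT by simp
        obtain v where v: "v \<in> T" using cT by fastforce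
        have Tv: "T - {v} \<noteq> {}"
        proof
          assume "T - {v} = {}" then have "T \<subseteq> {v}" by blast
          then have "card T \<le> 1" using card_mono[of "{v}" T] by simp
          then show False using cT by simp
        qed
        have inj: "inj_on (\<lambda>R. R - {v}) G" using min_inj[OF less.prems(2) T v Tv] .
        have lam': "lam ((\<lambda>R. R - {v}) ` G)" using lam_img[OF less.prems(2) inj] .
        have mem': "\<forall>S\<in>(\<lambda>R. R - {v}) ` G. S \<subseteq> X - {v} \<and> 2 \<le> card S"
        proof
          fix S assume "S \<in> (\<lambda>R. R - {v}) ` G"
          then obtain R where R: "R \<in> G" "S = R - {v}" by auto
          have fR: "finite R" using R less.prems(1,3) finite_subset by blast
          show "S \<subseteq> X - {v} \<and> 2 \<le> card S"
          proof (cases "v \<in> R")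
            case True
            have "T \<subseteq> R" using min_sub[OF less.prems(2) T R(1) v True] .
            then have "card T \<le> card R" using card_mono[OF fR] by blast
            then show ?thesis using R less.prems(3) True fR c3T by auto
          next
            case False then show ?thesis using R less.prems(3) by auto
          qed
        qed
        have "card ((\<lambda>R. R - {v}) ` G) \<le> card (X - {v}) - 1"
          using count_L[OF _ lam' mem'] less.prems(1) by simp
        moreover have "card ((\<lambda>R. R - {v}) ` G) = card G" using card_image[OF inj] .
        moreover have "card (X - {v}) = card X - 1" using v cT less.prems(1)
          by (simp add: subsetD)
        ultimately show ?thesis by simp
      next
        case True
        then obtain u v0 where uv: "T = {u, v0}" "u \<noteq> v0" by (meson card_2_iff)
        have notboth: "\<not> ({u, v0} \<subseteq> {a,b,x})"
        proof
          assume "{u, v0} \<subseteq> {a,b,x}"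
          then have "(a \<in> T \<and> b \<in> T) \<or> (a \<in> T \<and> x \<in> T) \<or> (b \<in> T \<and> x \<in> T)"
            using uv by auto
          then have "S \<subseteq> T" using less.prems(11) T(1) by blast
          then have "card S \<le> card T" using card_mono[OF fT] by blast
          then show False using True c3S by simp
        qed
        then obtain v where v: "v \<in> T" "v \<notin> {a,b,x}" using uv by blast
        have Tv: "T - {v} \<noteq> {}" using uv v by blast
        define G' where "G' = (\<lambda>R. R - {v}) ` (G - {T})"
        have inj: "inj_on (\<lambda>R. R - {v}) G" using min_inj[OF less.prems(2) T v(1) Tv] .
        have inj': "inj_on (\<lambda>R. R - {v}) (G - {T})" using inj inj_on_subset by blast
        have lamG': "lam (G - {T})" using less.prems(2) unfolding lam_def by blast
        have lam': "lam G'" unfolding G'_def using lam_img[OF lamG' inj'] .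
        have mem': "\<forall>S\<in>G'. S \<subseteq> X - {v} \<and> 2 \<le> card S"
        proof
          fix S assume "S \<in> G'"
          then obtain R where R: "R \<in> G" "R \<noteq> T" "S = R - {v}" unfolding G'_def by auto
          have fR: "finite R" using R less.prems(1,3) finite_subset by blast
          show "S \<subseteq> X - {v} \<and> 2 \<le> card S"
          proof (cases "v \<in> R")
            case True
            have "3 \<le> card R" using card_big[OF less.prems(2) T R(1) v(1) True R(2) fR cT(1)] .
            then show ?thesis using R less.prems(3) True fR by auto
          next
            case False then show ?thesis using R less.prems(3) by auto
          qed
        qed
        have S': "S - {v} \<in> insert (X - {v}) G'"
        proof (cases "S = X")
          case True then show ?thesis by simp
        next
          case False
          then have "S \<in> G" using less.prems(4) by simp
          moreover have "S \<noteq> T" using c3S True by auto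
          ultimately show ?thesis unfolding G'_def by blast
        qed
        have br': "\<forall>R\<in>G'. ((a \<in> R \<and> b \<in> R) \<or> (a \<in> R \<and> x \<in> R) \<or> (b \<in> R \<and> x \<in> R)) \<longrightarrow> S - {v} \<subseteq> R"
        proof (intro ballI impI)
          fix R' assume "R' \<in> G'" and h: "(a \<in> R' \<and> b \<in> R') \<or> (a \<in> R' \<and> x \<in> R') \<or> (b \<in> R' \<and> x \<in> R')"
          then obtain R where R: "R \<in> G" "R' = R - {v}" unfolding G'_def by auto
          then have "S \<subseteq> R" using less.prems(11) h by blast
          then show "S - {v} \<subseteq> R'" using R by blast
        qed
        have cX: "card (X - {v}) < card X" using v cT less.prems(1)
          by (meson card_Diff1_less in_mono)
        have IH: "card G' \<le> card (X - {v}) - 2"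
          using less.hyps[OF cX _ lam' mem' S'] less.prems(1,5-10) v br' by auto
        have "card G' = card (G - {T})" unfolding G'_def using card_image[OF inj'] .
        also have "\<dots> = card G - 1" using T finG by simp
        finally have "card G - 1 \<le> card X - 3" using IH v cT less.prems(1)
          by (simp add: subsetD)
        moreover have "card G \<ge> 1" using finG \<open>G \<noteq> {}\<close> by (simp add: Suc_leI card_gt_0_iff)
        ultimately show ?thesis using c3X by linarith
      qed
    qed
  qed

  have nr_trans: "D x y < c" if assms: "umet S D" "a \<in> S" "x \<in> S" "y \<in> S" "nr D c a x" "nr D c a y" "x \<noteq> y" for S :: "nat set" and D :: "nat \<Rightarrow> nat \<Rightarrow> real" and a x y :: nat and c :: real
  proof -
    have s: "D x a = D a x" using assms(1-3) unfolding umet_def by blast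
    have u: "D x y \<le> max (D x a) (D a y)" using assms(1-4) unfolding umet_def by blast
    show ?thesis
    proof (cases "x = a")
      case True then show ?thesis using assms(6,7) unfolding nr_def by auto
    next
      case False
      show ?thesis
      proof (cases "y = a")
        case True then show ?thesis using assms(5,7) s unfolding nr_def by auto
      next
        case False
        then show ?thesis using \<open>x \<noteq> a\<close> assms(5,6) s u unfolding nr_def by auto
      qed
    qed
  qed

  have nr_one: "nr D c a x \<or> nr D c b x" if assms: "umet S D" "a \<in> S" "b \<in> S" "x \<in> S" "a \<noteq> b" "D a b = c" "\<forall>i\<in>S. \<forall>j\<in>S. D i j \<le> c" "\<forall>i\<in>S. \<forall>j\<in>S. \<forall>k\<in>S. i \<noteq> j \<and> i \<noteq> k \<and> j \<noteq> k \<longrightarrow> \<not> (D i j = c \<and> D i k = c \<and> D j k = c)" for S :: "nat set" and D :: "nat \<Rightarrow> nat \<Rightarrow> real" and a b x :: nat and c :: real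
  proof (cases "x = a \<or> x = b")
    case True then show ?thesis unfolding nr_def by auto
  next
    case False
    then have "\<not> (D a b = c \<and> D a x = c \<and> D b x = c)" using assms(8)[rule_format, OF assms(2,3,4)] assms(5) by blast
    then have "D a x \<noteq> c \<or> D b x \<noteq> c" using assms(6) by blast
    moreover have "D a x \<le> c" "D b x \<le> c" using assms(7) assms(2-4) by auto
    ultimately show ?thesis unfolding nr_def by auto
  qed

  have matching: "(nr D c a x \<and> nr D c b y) \<or> (nr D c a y \<and> nr D c b x)" if assms: "umet S D" "a \<in> S" "b \<in> S" "x \<in> S" "y \<in> S" "a \<noteq> b" "x \<noteq> y" "D a b = c" "D x y = c" "\<forall>i\<in>S. \<forall>j\<in>S. D i j \<le> c" "\<forall>i\<in>S. \<forall>j\<in>S. \<forall>k\<in>S. i \<noteq> j \<and> i \<noteq> k \<and> j \<noteq> k \<longrightarrow> \<not> (D i j = c \<and> D i k = c \<and> D j k = c)" for S :: "nat set" and D :: "nat \<Rightarrow> nat \<Rightarrow> real" and a b x y :: nat and c :: real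
  proof -
    have x: "nr D c a x \<or> nr D c b x" using nr_one[OF assms(1-4,6,8,10,11)] .
    have y: "nr D c a y \<or> nr D c b y" using nr_one[OF assms(1-3,5,6,8,10,11)] .
    have na: "\<not> (nr D c a x \<and> nr D c a y)" using nr_trans[OF assms(1,2,4,5) _ _ assms(7)] assms(9) by auto
    have nb: "\<not> (nr D c b x \<and> nr D c b y)" using nr_trans[OF assms(1,3,4,5) _ _ assms(7)] assms(9) by auto
    show ?thesis using x y na nb by blast
  qed

  have cross: "a \<noteq> y \<and> D a y = c" if assms: "umet S D" "a \<in> S" "b \<in> S" "y \<in> S" "a \<noteq> b" "D a b = c" "nr D c b y" "\<forall>i\<in>S. \<forall>j\<in>S. D i j \<le> c" for S :: "nat set" and D :: "nat \<Rightarrow> nat \<Rightarrow> real" and a b y :: nat and c :: real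
  proof
    show "a \<noteq> y"
    proof
      assume "a = y"
      then have "D b a < c" using assms(5,7) unfolding nr_def by auto
      moreover have "D b a = D a b" using assms(1-3) unfolding umet_def by blast
      ultimately show False using assms(6) by simp
    qed
    show "D a y = c"
    proof (cases "y = b")
      case True then show ?thesis using assms(6) by simp
    next
      case False
      then have "D b y < c" using assms(7) unfolding nr_def by auto
      moreover have "D y b = D b y" using assms(1,3,4) unfolding umet_def by blast
      moreover have "D a b \<le> max (D a y) (D y b)" using assms(1-4) unfolding umet_def by blast
      moreover have "D a y \<le> c" using assms(2,4,8) by blast
      ultimately show ?thesis using assms(6) by auto
    qed
  qed

  have step1: "False" if assms: "umet S D1" "umet S D" "a \<in> S" "b \<in> S" "x \<in> S" "y \<in> S" "x \<noteq> y" "nr D c a x" "nr D c b y" "D1 a b < c" "D1 x y = c" "\<forall>i\<in>S. \<forall>j\<in>S. i \<noteq> j \<longrightarrow> D1 i j \<le> D i j" for S :: "nat set" and D1 D :: "nat \<Rightarrow> nat \<Rightarrow> real" and a b x y :: nat and c :: real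
  proof -
    have ge: "D1 a y \<ge> c"
    proof (cases "x = a")
      case True then show ?thesis using assms(11) by simp
    next
      case False
      then have "D x a < c" "D a x = D x a"
        using assms(8) assms(2,3,5) unfolding nr_def umet_def by auto
      moreover have "D1 x a \<le> D x a" using assms(12)[rule_format, OF assms(5,3)] False by auto
      moreover have "D1 x y \<le> max (D1 x a) (D1 a y)" using assms(1,3,5,6) unfolding umet_def by blast
      ultimately show ?thesis using assms(11) by auto
    qed
    have lt: "D1 a y < c"
    proof (cases "y = b")
      case True then show ?thesis using assms(10) by simp
    next
      case False
      then have "D b y < c" using assms(9) unfolding nr_def by auto
      moreover have "D1 b y \<le> D b y" using assms(12)[rule_format, OF assms(4,6)] False by auto
      moreover have "D1 a y \<le> max (D1 a b) (D1 b y)" using assms(1,3,4,6) unfolding umet_def by blast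
      ultimately show ?thesis using assms(10) by auto
    qed
    show False using ge lt by simp
  qed

  have tt_sub: "S \<subseteq> {1..N}" if "tree_topology N F" "S \<in> insert {1..N} F" for N :: nat and F :: "nat set set" and S :: "nat set"
    using that unfolding tree_topology_def by auto

  have tt_fin: "finite F" if "tree_topology N F" for N :: nat and F :: "nat set set"
  proof -
    have "F \<subseteq> Pow {1..N}" using that unfolding tree_topology_def by auto
    then show "finite F" using finite_subset by blast
  qed

  have tt_lam: "lam (insert {1..N} F)" if assms: "tree_topology N F" for N :: nat and F :: "nat set set"
    unfolding lam_def
  proof (intro ballI impI)
    fix S T assume st: "S \<in> insert {1..N} F" "T \<in> insert {1..N} F" "S \<noteq> T"
    have sS: "S \<subseteq> {1..N}" "T \<subseteq> {1..N}" using tt_sub[OF assms] st by auto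
    show "S \<subset> T \<or> T \<subset> S \<or> S \<inter> T = {}"
    proof (cases "S = {1..N}")
      case True then show ?thesis using sS st(3) by blast
    next
      case False
      show ?thesis
      proof (cases "T = {1..N}")
        case True then show ?thesis using sS st(3) by blast
      next
        case False
        then have "S \<in> F" "T \<in> F" using st \<open>S \<noteq> {1..N}\<close> by auto
        then show ?thesis using assms st(3) unfolding tree_topology_def by blast
      qed
    qed
  qed

  have cl_mem: "cl N F q \<in> insert {1..N} F \<and> q \<subseteq> cl N F q" if assms: "tree_topology N F" "q \<subseteq> {1..N}" "q \<noteq> {}" for N :: nat and F :: "nat set set" and q :: "nat set"
  proof (cases "\<exists>S\<in>F. q \<subseteq> S")
    case False then show ?thesis using assms unfolding cl_def by simp
  next
    case True
    define A where "A = {S\<in>F. q \<subseteq> S}"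
    have fA: "finite A" using tt_fin[OF assms(1)] unfolding A_def by simp
    have nA: "A \<noteq> {}" using True unfolding A_def by blast
    obtain M where M: "M \<in> A" "\<forall>R\<in>A. \<not> R \<subset> M" using min_elem[OF fA nA] by blast
    have lamF: "lam F" using tt_lam[OF assms(1)] unfolding lam_def by blast
    have sub: "\<forall>R\<in>A. M \<subseteq> R"
    proof
      fix R assume R: "R \<in> A"
      show "M \<subseteq> R"
      proof (cases "R = M")
        case False
        have "R \<in> F" "M \<in> F" using R M unfolding A_def by auto
        then have "R \<subset> M \<or> M \<subset> R \<or> R \<inter> M = {}" using lamF False unfolding lam_def by blast
        moreover have "q \<subseteq> R \<inter> M" using R M unfolding A_def by auto
        ultimately show ?thesis using M(2) R assms(3) by blast
      qed simp
    qed
    have "\<Inter>A = M" using sub M(1) by blast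
    then have "cl N F q = M" unfolding cl_def A_def using True by simp
    then show ?thesis using M(1) unfolding A_def by auto
  qed

  have cl_least: "cl N F q \<subseteq> T" if assms: "tree_topology N F" "q \<subseteq> {1..N}" "q \<noteq> {}" "q \<subseteq> T" "T \<in> insert {1..N} F" for N :: nat and F :: "nat set set" and q T :: "nat set"
  proof (cases "T \<in> F")
    case True
    then have "\<exists>S\<in>F. q \<subseteq> S" using assms(4) by blast
    then show ?thesis unfolding cl_def using True assms(4) by auto
  next
    case False
    then have "T = {1..N}" using assms(5) by simp
    then show ?thesis using tt_sub[OF assms(1)] cl_mem[OF assms(1-3)] by blast
  qed

  have h_mono: "h S \<le> h T" if assms: "hok N F h" "S \<in> insert {1..N} F" "T \<in> insert {1..N} F" "S \<subseteq> T" for N :: nat and F :: "nat set set" and h :: "nat set \<Rightarrow> real" and S T :: "nat set"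
  proof (cases "S = T")
    case False then have "S \<subset> T" using assms(4) by blast
    then have "h S < h T" using assms(1) assms(2,3) unfolding hok_def by blast
    then show ?thesis by simp
  qed simp

  have ultra: "h (cl N F {i,k}) \<le> max (h (cl N F {i,j})) (h (cl N F {j,k}))" if assms: "tree_topology N F" "hok N F h" "i \<in> {1..N}" "j \<in> {1..N}" "k \<in> {1..N}" for N :: nat and F :: "nat set set" and h :: "nat set \<Rightarrow> real" and i j k :: nat
  proof -
    have ij: "cl N F {i,j} \<in> insert {1..N} F" "{i,j} \<subseteq> cl N F {i,j}" using cl_mem[OF assms(1), of "{i,j}"] assms(3,4) by auto
    have jk: "cl N F {j,k} \<in> insert {1..N} F" "{j,k} \<subseteq> cl N F {j,k}" using cl_mem[OF assms(1), of "{j,k}"] assms(4,5) by auto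
    have ik: "cl N F {i,k} \<in> insert {1..N} F" using cl_mem[OF assms(1), of "{i,k}"] assms(3,5) by auto
    have "cl N F {i,j} \<subseteq> cl N F {j,k} \<or> cl N F {j,k} \<subseteq> cl N F {i,j}"
    proof -
      have "j \<in> cl N F {i,j} \<inter> cl N F {j,k}" using ij jk by auto
      then show ?thesis using tt_lam[OF assms(1)] ij(1) jk(1) unfolding lam_def by blast
    qed
    then show ?thesis
    proof
      assume a: "cl N F {i,j} \<subseteq> cl N F {j,k}"
      then have "cl N F {i,k} \<subseteq> cl N F {j,k}" using cl_least[OF assms(1), of "{i,k}"] assms(3,5) ij jk by auto
      then show ?thesis using h_mono[OF assms(2) ik jk(1)] by simp
    next
      assume a: "cl N F {j,k} \<subseteq> cl N F {i,j}"
      then have "cl N F {i,k} \<subseteq> cl N F {i,j}" using cl_least[OF assms(1), of "{i,k}"] assms(3,5) ij jk by auto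
      then show ?thesis using h_mono[OF assms(2) ik ij(1)] by simp
    qed
  qed

  have samecl: "cl N F q = cl N F q'" if assms: "tree_topology N F" "hok N F h" "q \<subseteq> {1..N}" "q' \<subseteq> {1..N}" "q \<inter> q' \<noteq> {}" "h (cl N F q) = h (cl N F q')" for N :: nat and F :: "nat set set" and h :: "nat set \<Rightarrow> real" and q q' :: "nat set"
  proof (rule ccontr)
    assume ne: "cl N F q \<noteq> cl N F q'"
    have m: "cl N F q \<in> insert {1..N} F" "q \<subseteq> cl N F q" using cl_mem[OF assms(1,3)] assms(5) by auto
    have m': "cl N F q' \<in> insert {1..N} F" "q' \<subseteq> cl N F q'" using cl_mem[OF assms(1,4)] assms(5) by auto
    have "cl N F q \<inter> cl N F q' \<noteq> {}" using m m' assms(5) by blast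
    then have "cl N F q \<subset> cl N F q' \<or> cl N F q' \<subset> cl N F q"
      using tt_lam[OF assms(1)] m(1) m'(1) ne unfolding lam_def by blast
    moreover have "\<forall>S\<in>insert {1..N} F. \<forall>T\<in>insert {1..N} F. S \<subset> T \<longrightarrow> h S < h T"
      using assms(2) unfolding hok_def by blast
    ultimately show False using assms(6) m(1) m'(1) by (metis less_irrefl)
  qed

  have pairs_iff: "{i,j} \<in> pairs N \<longleftrightarrow> i \<in> {1..N} \<and> j \<in> {1..N} \<and> i \<noteq> j" for i j N :: nat
    unfolding pairs_def by (cases "i = j") auto

  have pairs_obtain: "\<exists>x y. q = {x,y} \<and> x \<noteq> y \<and> x \<in> {1..N} \<and> y \<in> {1..N}" if assms: "q \<in> pairs N" for q :: "nat set" and N :: nat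
  proof -
    have "card q = 2" "q \<subseteq> {1..N}" using assms unfolding pairs_def by auto
    then obtain x y where "q = {x,y}" "x \<noteq> y" using card_2_iff by metis
    then show ?thesis using \<open>q \<subseteq> {1..N}\<close> by auto
  qed

  have ut_obtain: "\<exists>h. hok N F h \<and> w = (\<lambda>p. if p \<in> pairs N then 2 * h (cl N F p) else 0)" if "w \<in> ut N F" for w :: "nat set \<Rightarrow> real" and N :: nat and F :: "nat set set"
    using that unfolding ut_def hok_def by blast

  have main: "(\<exists>q\<in>pairs N. eq_class N F p \<subseteq> eq_class N F1 q) \<or>
         (\<exists>q\<in>pairs N. eq_class N F p \<subseteq> eq_class N F2 q)"
  proof -
    note tt1 = assms(1) and tt2 = assms(3) and tt = assms(5)
    obtain w1 w2 where w1: "w1 \<in> ut N F1" and w2: "w2 \<in> ut N F2" and w: "tropical_sum w1 w2 \<in> ut N F"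
      using assms(7) unfolding Cset_def by blast
    obtain h1 where h1: "hok N F1 h1" "w1 = (\<lambda>p. if p \<in> pairs N then 2 * h1 (cl N F1 p) else 0)"
      using ut_obtain[OF w1] by blast
    obtain h2 where h2: "hok N F2 h2" "w2 = (\<lambda>p. if p \<in> pairs N then 2 * h2 (cl N F2 p) else 0)"
      using ut_obtain[OF w2] by blast
    obtain h where h: "hok N F h" "tropical_sum w1 w2 = (\<lambda>p. if p \<in> pairs N then 2 * h (cl N F p) else 0)"
      using ut_obtain[OF w] by blast
    have maxeq: "h (cl N F q) = max (h1 (cl N F1 q)) (h2 (cl N F2 q))" if q: "q \<in> pairs N" for q
    proof -
      have "tropical_sum w1 w2 q = 2 * h (cl N F q)" using h(2) q by simp
      then have "max (2 * h1 (cl N F1 q)) (2 * h2 (cl N F2 q)) = 2 * h (cl N F q)"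
        unfolding tropical_sum_def h1(2) h2(2) using q by simp
      then show ?thesis by (simp add: max_def split: if_splits)
    qed
    obtain a b where ab: "p = {a,b}" "a \<noteq> b" "a \<in> {1..N}" "b \<in> {1..N}"
      using pairs_obtain[OF assms(8)] by blast
    define S where "S = cl N F {a,b}"
    define D where "D = (\<lambda>i j. h (cl N F {i,j}))"
    define D1 where "D1 = (\<lambda>i j. h1 (cl N F1 {i,j}))"
    define D2 where "D2 = (\<lambda>i j. h2 (cl N F2 {i,j}))"
    define c where "c = D a b"
    have SR: "S \<in> insert {1..N} F" "{a,b} \<subseteq> S" using cl_mem[OF tt, of "{a,b}"] ab unfolding S_def by auto
    have SN: "S \<subseteq> {1..N}" using tt_sub[OF tt SR(1)] .
    have N2: "2 \<le> N"
    proof -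
      have "card {a,b} \<le> card {1..N}" using ab by (intro card_mono) auto
      then show ?thesis using ab(2) by simp
    qed
    have umetk: "umet S (\<lambda>i j. hk (cl N Fk {i,j}))" if "tree_topology N Fk" "hok N Fk hk" for Fk hk
      unfolding umet_def
    proof (intro conjI ballI)
      fix i j assume "i \<in> S" "j \<in> S"
      show "hk (cl N Fk {i, j}) = hk (cl N Fk {j, i})" by (simp add: insert_commute)
    next
      fix i j k assume "i \<in> S" "j \<in> S" "k \<in> S"
      then show "hk (cl N Fk {i, k}) \<le> max (hk (cl N Fk {i, j})) (hk (cl N Fk {j, k}))"
        using ultra[OF that] SN by blast
    qed
    have uD: "umet S D" unfolding D_def using umetk[OF tt h(1)] .
    have uD1: "umet S D1" unfolding D1_def using umetk[OF tt1 h1(1)] .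
    have uD2: "umet S D2" unfolding D2_def using umetk[OF tt2 h2(1)] .
    have Dsym: "D i j = D j i" for i j unfolding D_def by (simp add: insert_commute)
    have D1sym: "D1 i j = D1 j i" for i j unfolding D1_def by (simp add: insert_commute)
    have clS: "cl N F {i,j} \<subseteq> S" "cl N F {i,j} \<in> insert {1..N} F" if "i \<in> S" "j \<in> S" for i j
    proof -
      have ij: "{i,j} \<subseteq> {1..N}" using that SN by auto
      have ij2: "{i,j} \<subseteq> S" using that by auto
      show "cl N F {i,j} \<subseteq> S" using cl_least[OF tt ij _ ij2 SR(1)] by simp
      show "cl N F {i,j} \<in> insert {1..N} F" using cl_mem[OF tt ij] by simp
    qed
    have Dle: "\<forall>i\<in>S. \<forall>j\<in>S. D i j \<le> c"
    proof (intro ballI)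
      fix i j assume "i \<in> S" "j \<in> S"
      then show "D i j \<le> c" unfolding D_def c_def S_def[symmetric]
        using h_mono[OF h(1) clS(2) SR(1) clS(1)] by blast
    qed
    have Deq: "cl N F {i,j} = S" if "i \<in> S" "j \<in> S" "D i j = c" for i j
    proof (rule ccontr)
      assume "cl N F {i,j} \<noteq> S"
      then have "cl N F {i,j} \<subset> S" using clS(1)[OF that(1,2)] by blast
      then have "h (cl N F {i,j}) < h S" using h(1) clS(2)[OF that(1,2)] SR(1) unfolding hok_def by blast
      then show False using that(3) unfolding D_def c_def S_def by simp
    qed
    have D1le: "\<forall>i\<in>S. \<forall>j\<in>S. i \<noteq> j \<longrightarrow> D1 i j \<le> D i j"
      using maxeq pairs_iff SN unfolding D_def D1_def by (metis max.cobounded1 subsetD)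
    have D2le: "\<forall>i\<in>S. \<forall>j\<in>S. i \<noteq> j \<longrightarrow> D2 i j \<le> D i j"
      using maxeq pairs_iff SN unfolding D_def D2_def by (metis max.cobounded2 subsetD)
    have notri: "\<forall>i\<in>S. \<forall>j\<in>S. \<forall>k\<in>S. i \<noteq> j \<and> i \<noteq> k \<and> j \<noteq> k \<longrightarrow> \<not> (D i j = c \<and> D i k = c \<and> D j k = c)"
    proof (intro ballI impI notI)
      fix i j k assume ijk: "i \<in> S" "j \<in> S" "k \<in> S" and d: "i \<noteq> j \<and> i \<noteq> k \<and> j \<noteq> k"
        and e: "D i j = c \<and> D i k = c \<and> D j k = c"
      have e1: "cl N F {i,j} = S" "cl N F {i,k} = S" "cl N F {j,k} = S" using Deq ijk e by auto
      have lamG: "lam (insert {1..N} F)" using tt_lam[OF tt] .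
      have memG: "\<forall>T\<in>insert {1..N} F. T \<subseteq> {1..N} \<and> 2 \<le> card T"
        using assms(5) N2 unfolding tree_topology_def by auto
      have br: "\<forall>R\<in>insert {1..N} F. ((i \<in> R \<and> j \<in> R) \<or> (i \<in> R \<and> k \<in> R) \<or> (j \<in> R \<and> k \<in> R)) \<longrightarrow> S \<subseteq> R"
      proof (intro ballI impI)
        fix R assume R: "R \<in> insert {1..N} F" and hh: "(i \<in> R \<and> j \<in> R) \<or> (i \<in> R \<and> k \<in> R) \<or> (j \<in> R \<and> k \<in> R)"
        have sub: "{i,j,k} \<subseteq> {1..N}" using ijk SN by auto
        from hh show "S \<subseteq> R"
        proof (elim disjE conjE)
          assume "i \<in> R" "j \<in> R" then show ?thesis using cl_least[OF tt, of "{i,j}" R] R sub e1 by auto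
        next
          assume "i \<in> R" "k \<in> R" then show ?thesis using cl_least[OF tt, of "{i,k}" R] R sub e1 by auto
        next
          assume "j \<in> R" "k \<in> R" then show ?thesis using cl_least[OF tt, of "{j,k}" R] R sub e1 by auto
        qed
      qed
      have "card (insert {1..N} F) \<le> card {1..N} - 2"
        using count_R[OF _ lamG memG _ ijk _ _ _ br] SR(1) d by auto
      moreover have "{1..N} \<notin> F"
      proof
        assume "{1..N} \<in> F"
        then have "card {1..N} \<le> N - 1" using assms(5) unfolding tree_topology_def by blast
        then show False using N2 by simp
      qed
      moreover have "card F = N - 2" using assms(6) unfolding full_dimensional_def .
      ultimately show False using tt_fin[OF tt] N2 by simp
    qed
    have Dab: "D a b = c" unfolding c_def ..
    have aS: "a \<in> S" "b \<in> S" using SR(2) by auto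
    have cls: "\<exists>x y. q = {x,y} \<and> x \<noteq> y \<and> x \<in> S \<and> y \<in> S \<and> D x y = c \<and> nr D c a x \<and> nr D c b y"
      if q: "q \<in> eq_class N F p" for q
    proof -
      have qp: "q \<in> pairs N" "cl N F q = S" using q unfolding eq_class_def S_def ab(1) by auto
      obtain x y where xy: "q = {x,y}" "x \<noteq> y" "x \<in> {1..N}" "y \<in> {1..N}" using pairs_obtain[OF qp(1)] by blast
      have xyS: "x \<in> S" "y \<in> S" using cl_mem[OF tt, of q] qp xy by auto
      have Dxy: "D x y = c" unfolding D_def c_def using qp xy S_def by simp
      have "(nr D c a x \<and> nr D c b y) \<or> (nr D c a y \<and> nr D c b x)"
        using matching[OF uD aS xyS ab(2) xy(2) Dab Dxy Dle notri] .
      then show ?thesis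
      proof
        assume "nr D c a x \<and> nr D c b y" then show ?thesis using xy xyS Dxy by blast
      next
        assume "nr D c a y \<and> nr D c b x" then show ?thesis using xy xyS Dxy Dsym
          by (metis insert_commute)
      qed
    qed
    have key: "eq_class N F p \<subseteq> eq_class N Fk p"
      if ttk: "tree_topology N Fk" and hk: "hok N Fk hk" 
        and all: "\<forall>x\<in>S. \<forall>y\<in>S. x \<noteq> y \<and> D x y = c \<longrightarrow> hk (cl N Fk {x,y}) = c" for Fk hk
    proof
      fix q assume q: "q \<in> eq_class N F p"
      obtain x y where xy: "q = {x,y}" "x \<noteq> y" "x \<in> S" "y \<in> S" "D x y = c" "nr D c a x" "nr D c b y"
        using cls[OF q] by blast
      have cr: "a \<noteq> y \<and> D a y = c" using cross[OF uD aS(1,2) xy(4) ab(2) Dab xy(7) Dle] .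
      have k1: "hk (cl N Fk {a,b}) = c" using all[rule_format, OF aS(1,2)] ab(2) Dab by blast
      have k2: "hk (cl N Fk {a,y}) = c" using all[rule_format, OF aS(1) xy(4)] cr by blast
      have k3: "hk (cl N Fk {x,y}) = c" using all[rule_format, OF xy(3,4)] xy(2,5) by blast
      have sub: "{a,b,x,y} \<subseteq> {1..N}" using aS xy(3,4) SN by blast
      have e1: "cl N Fk {a,b} = cl N Fk {a,y}" using samecl[OF ttk hk, of "{a,b}" "{a,y}"] sub k1 k2 by auto
      have e2: "cl N Fk {a,y} = cl N Fk {x,y}" using samecl[OF ttk hk, of "{a,y}" "{x,y}"] sub k2 k3 by auto
      have "q \<in> pairs N" using q unfolding eq_class_def by auto
      then show "q \<in> eq_class N Fk p" unfolding eq_class_def ab(1) xy(1) using e1 e2 by simp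
    qed
    show ?thesis
    proof (cases "\<forall>x\<in>S. \<forall>y\<in>S. x \<noteq> y \<and> D x y = c \<longrightarrow> D1 x y = c")
      case True
      then have "eq_class N F p \<subseteq> eq_class N F1 p" using key[OF tt1 h1(1)] unfolding D1_def by blast
      then show ?thesis using assms(8) by blast
    next
      case False
      then obtain a0 b0 where ab0: "a0 \<in> S" "b0 \<in> S" "a0 \<noteq> b0" "D a0 b0 = c" "D1 a0 b0 \<noteq> c" by blast
      have lt0: "D1 a0 b0 < c" using ab0 D1le by force
      have "\<forall>x\<in>S. \<forall>y\<in>S. x \<noteq> y \<and> D x y = c \<longrightarrow> D2 x y = c"
      proof (intro ballI impI)
        fix x y assume xyS: "x \<in> S" "y \<in> S" and hxy: "x \<noteq> y \<and> D x y = c"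
        show "D2 x y = c"
        proof (rule ccontr)
          assume "D2 x y \<noteq> c"
          then have "D2 x y < c" using D2le xyS hxy by force
          moreover have "D x y = max (D1 x y) (D2 x y)" unfolding D_def D1_def D2_def
            using maxeq pairs_iff xyS hxy SN by (meson subsetD)
          ultimately have d1: "D1 x y = c" using hxy by (simp add: max_def split: if_splits)
          have "(nr D c a0 x \<and> nr D c b0 y) \<or> (nr D c a0 y \<and> nr D c b0 x)"
            using matching[OF uD ab0(1,2) xyS ab0(3) _ ab0(4) _ Dle notri] hxy by blast
          then show False
          proof
            assume "nr D c a0 x \<and> nr D c b0 y"
            then show False using step1[OF uD1 uD ab0(1,2) xyS _ _ _ lt0 d1 D1le] hxy by blast
          next
            assume "nr D c a0 y \<and> nr D c b0 x"
            moreover have "D1 y x = c" using d1 D1sym by simp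
            ultimately show False using step1[OF uD1 uD ab0(1,2) xyS(2,1) _ _ _ lt0 _ D1le] hxy by blast
          qed
        qed
      qed
      then have "eq_class N F p \<subseteq> eq_class N F2 p" using key[OF tt2 h2(1)] unfolding D2_def by blast
      then show ?thesis using assms(8) by blast
    qed
  qed
  then show "((\<exists>q\<in>pairs N. eq_class N F p \<subseteq> eq_class N F1 q) \<or>
         (\<exists>q\<in>pairs N. eq_class N F p \<subseteq> eq_class N F2 q)) \<and> (True \<or> True)" by simp
qed

theorem mainTheorem17:
  fixes N :: nat and F1 F2 F :: "nat set set" and p :: "nat set"
  assumes "tree_topology N F1" and "full_dimensional N F1"
    and "tree_topology N F2" and "full_dimensional N F2"
    and "tree_topology N F" and "full_dimensional N F"
    and "F \<in> Cset N F1 F2"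
    and "p \<in> pairs N"
  shows "(\<exists>q\<in>pairs N. eq_class N F p \<subseteq> eq_class N F1 q) \<or>
         (\<exists>q\<in>pairs N. eq_class N F p \<subseteq> eq_class N F2 q)"
  using conjunct1[OF main_aux[OF assms]] .

end
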